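(* Let $N$ be a torsion-free finitely generated nilpotent group of nilpotency class $2$ with a finite generating subset $S$. For $x\in N$ let $I_x=\{[y,x]: y\in N\}\le\gamma_2(N)$, where $[a,b]=aba^{-1}b^{-1}$. Then there exists $C>0$ such that $\|I_x\|_S\le C\sqrt{\|x\|_S}$ for every $x\in N$.
   Context: $\|\cdot\|_S$ is word length; for a subgroup $H$, $\|H\|_S=\min\{\max_{h\in X}\|h\|_S: X\text{ a finite generating subset of }H\}$. In class $2$, $y\mapsto[y,x]=y\,x\,y^{-1}x^{-1}$ is a homomorphism $N\to\gamma_2(N)=[N,N]$ and $I_x$ is its image (the image of the map $\psi_{\mathrm{Inn}(x),2}$ in the paper). *)

theory Defs
  imports "HOL-Algebra.Algebra" Complex_Main
begin

definition comm :: "('a, 'b) monoid_scheme \<Rightarrow> 'a \<Rightarrow> 'a \<Rightarrow> 'a" where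
  "comm G a b = a \<otimes>\<^bsub>G\<^esub> b \<otimes>\<^bsub>G\<^esub> inv\<^bsub>G\<^esub> a \<otimes>\<^bsub>G\<^esub> inv\<^bsub>G\<^esub> b"

text \<open>Nilpotent of class exactly 2: all commutators are central (gamma_3 = 1), but the
  group is not abelian (gamma_2 is nontrivial).\<close>
definition nilpotent_class2 :: "('a, 'b) monoid_scheme \<Rightarrow> bool" where
  "nilpotent_class2 G \<longleftrightarrow>
     (\<forall>a\<in>carrier G. \<forall>b\<in>carrier G. \<forall>c\<in>carrier G. comm G (comm G a b) c = \<one>\<^bsub>G\<^esub>) \<and>
     (\<exists>a\<in>carrier G. \<exists>b\<in>carrier G. comm G a b \<noteq> \<one>\<^bsub>G\<^esub>)"

definition torsion_free :: "('a, 'b) monoid_scheme \<Rightarrow> bool" where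
  "torsion_free G \<longleftrightarrow>
     (\<forall>x\<in>carrier G. \<forall>n::nat. n > 0 \<longrightarrow> x [^]\<^bsub>G\<^esub> n = \<one>\<^bsub>G\<^esub> \<longrightarrow> x = \<one>\<^bsub>G\<^esub>)"

definition word_length :: "('a, 'b) monoid_scheme \<Rightarrow> 'a set \<Rightarrow> 'a \<Rightarrow> nat" where
  "word_length G S g = (LEAST n. \<exists>ws. length ws = n \<and>
      set ws \<subseteq> S \<union> (\<lambda>s. inv\<^bsub>G\<^esub> s) ` S \<and> foldr (\<lambda>a b. a \<otimes>\<^bsub>G\<^esub> b) ws \<one>\<^bsub>G\<^esub> = g)"

text \<open>\<parallel>H\<parallel>_S = min over finite generating subsets X of H of max_{h\<in>X} \<parallel>h\<parallel>_S
  (the empty maximum being 0).\<close>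
definition subgroup_norm :: "('a, 'b) monoid_scheme \<Rightarrow> 'a set \<Rightarrow> 'a set \<Rightarrow> nat" where
  "subgroup_norm G S H = (LEAST m. \<exists>T. finite T \<and> T \<subseteq> H \<and> generate G T = H \<and>
      (\<forall>h\<in>T. word_length G S h \<le> m))"

definition I_sub :: "('a, 'b) monoid_scheme \<Rightarrow> 'a \<Rightarrow> 'a set" where
  "I_sub G x = (\<lambda>y. comm G y x) ` carrier G"

end

theory Submission
  imports Defs
begin

locale c2grp = group G for G (structure) +
  fixes S :: "'a set"
  assumes S_sub: "S \<subseteq> carrier G"
    and cen: "\<forall>a\<in>carrier G. \<forall>b\<in>carrier G. \<forall>c\<in>carrier G. comm G (comm G a b) c = \<one>"
begin

lemma comm_closed[simp]: "a \<in> carrier G \<Longrightarrow> b \<in> carrier G \<Longrightarrow> comm G a b \<in> carrier G"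
  by (simp add: comm_def)

lemma central:
  assumes a: "a \<in> carrier G" and b: "b \<in> carrier G" and c: "c \<in> carrier G"
  shows "comm G a b \<otimes> c = c \<otimes> comm G a b"
proof -
  define z where "z = comm G a b"
  have z: "z \<in> carrier G" using a b by (simp add: z_def)
  have "comm G z c = \<one>" using cen a b c unfolding z_def by blast
  hence "z \<otimes> c \<otimes> inv z \<otimes> inv c = \<one>" by (simp only: comm_def)
  hence "inv (inv c) = z \<otimes> c \<otimes> inv z" using z c by (intro inv_equality) auto
  hence "c = z \<otimes> c \<otimes> inv z" using c by simp
  hence "c \<otimes> z = z \<otimes> c \<otimes> inv z \<otimes> z" by simp
  also have "\<dots> = z \<otimes> c" using z c by (simp add: m_assoc)
  finally show ?thesis by (simp add: z_def)
qed

lemma comm_mult_left: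
  assumes y1: "y1 \<in> carrier G" and y2: "y2 \<in> carrier G" and x: "x \<in> carrier G"
  shows "comm G (y1 \<otimes> y2) x = comm G y1 x \<otimes> comm G y2 x"
proof -
  have e: "y2 \<otimes> x \<otimes> inv y2 = comm G y2 x \<otimes> x"
    using y2 x by (simp add: comm_def m_assoc)
  have "comm G (y1 \<otimes> y2) x = y1 \<otimes> (y2 \<otimes> x \<otimes> inv y2) \<otimes> inv y1 \<otimes> inv x"
    using y1 y2 x by (simp add: comm_def m_assoc inv_mult_group)
  also have "\<dots> = y1 \<otimes> comm G y2 x \<otimes> x \<otimes> inv y1 \<otimes> inv x"
    using y1 y2 x by (simp add: e m_assoc)
  also have "\<dots> = comm G y2 x \<otimes> y1 \<otimes> x \<otimes> inv y1 \<otimes> inv x"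
    using y1 y2 x central[of y2 x y1] by (simp add: m_assoc)
  also have "\<dots> = comm G y2 x \<otimes> comm G y1 x"
    using y1 y2 x by (simp add: comm_def m_assoc)
  also have "\<dots> = comm G y1 x \<otimes> comm G y2 x"
    using y1 y2 x central[of y2 x "comm G y1 x"] by simp
  finally show ?thesis .
qed

lemma comm_mult_right:
  assumes y: "y \<in> carrier G" and x1: "x1 \<in> carrier G" and x2: "x2 \<in> carrier G"
  shows "comm G y (x1 \<otimes> x2) = comm G y x1 \<otimes> comm G y x2"
proof -
  have e: "y \<otimes> x2 \<otimes> inv y = comm G y x2 \<otimes> x2"
    using y x2 by (simp add: comm_def m_assoc)
  have cc: "\<And>z. z \<in> carrier G \<Longrightarrow> inv y \<otimes> (y \<otimes> z) = z"
    using y by (simp add: m_assoc[symmetric])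
  have "comm G y (x1 \<otimes> x2) = y \<otimes> x1 \<otimes> inv y \<otimes> (y \<otimes> x2 \<otimes> inv y) \<otimes> inv x2 \<otimes> inv x1"
    using y x1 x2 by (simp add: comm_def m_assoc inv_mult_group cc)
  also have "\<dots> = y \<otimes> x1 \<otimes> inv y \<otimes> comm G y x2 \<otimes> inv x1"
    using y x1 x2 by (simp add: e m_assoc)
  also have "\<dots> = comm G y x2 \<otimes> (y \<otimes> x1 \<otimes> inv y \<otimes> inv x1)"
  proof -
    define w where "w = y \<otimes> x1 \<otimes> inv y"
    define z where "z = comm G y x2"
    have w: "w \<in> carrier G" and z: "z \<in> carrier G" using y x1 x2 by (auto simp: w_def z_def)
    have "w \<otimes> z \<otimes> inv x1 = z \<otimes> w \<otimes> inv x1"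
      using central[of y x2 w] y x2 w by (simp add: z_def)
    thus ?thesis using w z x1 by (simp add: w_def[symmetric] z_def[symmetric] m_assoc)
  qed
  also have "\<dots> = comm G y x2 \<otimes> comm G y x1"
    using y x1 x2 by (simp add: comm_def m_assoc)
  also have "\<dots> = comm G y x1 \<otimes> comm G y x2"
    using y x1 x2 central[of y x2 "comm G y x1"] by simp
  finally show ?thesis .
qed

lemma comm_one_left[simp]: "x \<in> carrier G \<Longrightarrow> comm G \<one> x = \<one>"
  by (simp add: comm_def)

lemma comm_inv_left:
  assumes y: "y \<in> carrier G" and x: "x \<in> carrier G"
  shows "comm G (inv y) x = inv (comm G y x)"
proof -
  have "comm G (inv y) x \<otimes> comm G y x = \<one>"
    using comm_mult_left[of "inv y" y x] y x by simp
  thus ?thesis using y x by (intro inv_equality[symmetric]) auto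
qed

lemma comm_pow_left:
  assumes a: "a \<in> carrier G" and b: "b \<in> carrier G"
  shows "comm G (a [^] (k::nat)) b = comm G a b [^] k"
  by (induct k) (simp_all add: a b comm_mult_left)

lemma comm_pow_right:
  assumes a: "a \<in> carrier G" and b: "b \<in> carrier G"
  shows "comm G a (b [^] (k::nat)) = comm G a b [^] k"
proof (induct k)
  case 0 thus ?case using a by (simp add: comm_def)
next
  case (Suc k) thus ?case by (simp add: a b comm_mult_right)
qed

lemma comm_pow_pow:
  assumes a: "a \<in> carrier G" and b: "b \<in> carrier G"
  shows "comm G (a [^] (k::nat)) (b [^] k) = comm G a b [^] (k * k)"
  using a b by (simp add: comm_pow_right comm_pow_left nat_pow_pow)

definition alph :: "'a set" where "alph = S \<union> (\<lambda>s. inv s) ` S"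
definition ev :: "'a list \<Rightarrow> 'a" where "ev ws = foldr (\<lambda>a b. a \<otimes> b) ws \<one>"
definition hasw :: "'a \<Rightarrow> nat \<Rightarrow> bool" where
  "hasw g m \<longleftrightarrow> (\<exists>ws. length ws \<le> m \<and> set ws \<subseteq> alph \<and> ev ws = g)"

lemma alph_sub: "alph \<subseteq> carrier G"
  using S_sub by (auto simp: alph_def)

lemma inv_alph: "a \<in> alph \<Longrightarrow> inv a \<in> alph"
  using S_sub by (auto simp: alph_def)

lemma ev_closed: "set ws \<subseteq> carrier G \<Longrightarrow> ev ws \<in> carrier G"
  by (induct ws) (auto simp: ev_def)

lemma ev_append: "set ws \<subseteq> carrier G \<Longrightarrow> set vs \<subseteq> carrier G \<Longrightarrow> ev (ws @ vs) = ev ws \<otimes> ev vs"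
proof (induct ws)
  case Nil thus ?case using ev_closed[of vs] by (simp add: ev_def)
next
  case (Cons a ws) thus ?case using ev_closed[of vs] ev_closed[of ws] by (simp add: ev_def m_assoc)
qed

lemma hasw_carrier: "hasw g m \<Longrightarrow> g \<in> carrier G"
  using ev_closed alph_sub by (auto simp: hasw_def)

lemma hasw_mult: "hasw g m \<Longrightarrow> hasw h m' \<Longrightarrow> hasw (g \<otimes> h) (m + m')"
  unfolding hasw_def
proof (elim exE conjE)
  fix ws vs assume "length ws \<le> m" "set ws \<subseteq> alph" "ev ws = g" "length vs \<le> m'" "set vs \<subseteq> alph" "ev vs = h"
  thus "\<exists>us. length us \<le> m + m' \<and> set us \<subseteq> alph \<and> ev us = g \<otimes> h"
    using alph_sub by (intro exI[of _ "ws @ vs"]) (auto simp: ev_append)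
qed

lemma hasw_mono: "hasw g m \<Longrightarrow> m \<le> m' \<Longrightarrow> hasw g m'"
  unfolding hasw_def using le_trans by blast

lemma hasw_one: "hasw \<one> 0"
  unfolding hasw_def by (auto simp: ev_def)

lemma hasw_letter: "a \<in> alph \<Longrightarrow> hasw a 1"
  unfolding hasw_def using alph_sub
  by (intro exI[of _ "[a]"]) (auto simp: ev_def)

lemma hasw_pow: "hasw g m \<Longrightarrow> hasw (g [^] (r::nat)) (r * m)"
proof (induct r)
  case 0 thus ?case by (simp add: hasw_one)
next
  case (Suc r)
  have "hasw (g [^] r \<otimes> g) (r * m + m)" using Suc by (intro hasw_mult) auto
  thus ?case by (simp add: add.commute)
qed

lemma hasw_commk:
  assumes a: "a \<in> alph" and b: "b \<in> alph"
  shows "hasw (comm G (a [^] (k::nat)) (b [^] k)) (4 * k)"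
proof -
  have ac: "a \<in> carrier G" and bc: "b \<in> carrier G" using a b alph_sub by auto
  have h1: "hasw (a [^] k) k" using hasw_pow[OF hasw_letter[OF a], of k] by simp
  have h2: "hasw (b [^] k) k" using hasw_pow[OF hasw_letter[OF b], of k] by simp
  have h3: "hasw (inv a [^] k) k" using hasw_pow[OF hasw_letter[OF inv_alph[OF a]], of k] by simp
  have h4: "hasw (inv b [^] k) k" using hasw_pow[OF hasw_letter[OF inv_alph[OF b]], of k] by simp
  have "hasw (a [^] k \<otimes> b [^] k \<otimes> inv a [^] k \<otimes> inv b [^] k) (k + k + k + k)"
    by (intro hasw_mult h1 h2 h3 h4)
  moreover have "a [^] k \<otimes> b [^] k \<otimes> inv a [^] k \<otimes> inv b [^] k = comm G (a [^] k) (b [^] k)"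
    using ac bc by (simp add: comm_def nat_pow_inv)
  moreover have "k + k + k + k = 4 * k" by simp
  ultimately show ?thesis by simp
qed

lemma hasw_comm1:
  assumes a: "a \<in> alph" and b: "b \<in> alph"
  shows "hasw (comm G a b) 4"
proof -
  have ac: "a \<in> carrier G" and bc: "b \<in> carrier G" using a b alph_sub by auto
  show ?thesis using hasw_commk[OF a b, of 1] ac bc by simp
qed

lemma sqrt_ex: "\<exists>k::nat. k * k \<le> m \<and> m < Suc k * Suc k"
proof (induct m)
  case 0 thus ?case by auto
next
  case (Suc m)
  then obtain k where k: "k * k \<le> m" "m < Suc k * Suc k" by blast
  show ?case
  proof (cases "Suc m < Suc k * Suc k")
    case True thus ?thesis using k by (intro exI[of _ k]) auto
  next
    case False
    hence "Suc m = Suc k * Suc k" using k by linarith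
    thus ?thesis by (intro exI[of _ "Suc k"]) auto
  qed
qed

lemma hasw_key:
  assumes a: "a \<in> alph" and b: "b \<in> alph" and k: "k * k \<le> m" "m < Suc k * Suc k"
  shows "hasw (comm G a b [^] m) (12 * k)"
proof -
  have ac: "a \<in> carrier G" and bc: "b \<in> carrier G" using a b alph_sub by auto
  define r where "r = m - k * k"
  have m: "m = k * k + r" using k by (simp add: r_def)
  have r: "r \<le> 2 * k" using k by (simp add: r_def)
  have "hasw (comm G (a [^] k) (b [^] k) \<otimes> comm G a b [^] r) (4 * k + r * 4)"
    by (intro hasw_mult hasw_commk hasw_pow hasw_comm1 a b)
  moreover have "comm G (a [^] k) (b [^] k) \<otimes> comm G a b [^] r = comm G a b [^] m"
    using ac bc by (simp add: comm_pow_pow nat_pow_mult m)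
  ultimately show ?thesis using r by (auto elim: hasw_mono)
qed

definition prl :: "'a list \<Rightarrow> ('a \<Rightarrow> 'a) \<Rightarrow> 'a" where
  "prl xs f = foldr (\<lambda>w acc. f w \<otimes> acc) xs \<one>"

lemma prl_cong: "(\<And>w. w \<in> set xs \<Longrightarrow> f w = g w) \<Longrightarrow> prl xs f = prl xs g"
  by (induct xs) (auto simp: prl_def)

lemma prl_closed: "(\<And>w. w \<in> set xs \<Longrightarrow> f w \<in> carrier G) \<Longrightarrow> prl xs f \<in> carrier G"
  by (induct xs) (auto simp: prl_def)

lemma prl_hasw: "(\<And>w. w \<in> set xs \<Longrightarrow> hasw (f w) B) \<Longrightarrow> hasw (prl xs f) (length xs * B)"
proof (induct xs)
  case Nil thus ?case by (simp add: prl_def hasw_one)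
next
  case (Cons w xs)
  have "hasw (f w \<otimes> prl xs f) (B + length xs * B)" using Cons by (intro hasw_mult) auto
  thus ?case by (simp add: prl_def)
qed

lemma prl_step:
  fixes c :: "'a \<Rightarrow> nat"
  assumes s: "s \<in> carrier G" and xs: "set xs \<subseteq> carrier G" "distinct xs" "w0 \<in> set xs"
  shows "comm G s w0 \<otimes> prl xs (\<lambda>w. comm G s w [^] c w)
       = prl xs (\<lambda>w. comm G s w [^] (c w + (if w0 = w then 1 else 0)))"
  using xs
proof (induct xs)
  case Nil thus ?case by simp
next
  case (Cons w xs)
  have wc: "w \<in> carrier G" and w0c: "w0 \<in> carrier G" using Cons by auto
  have pc: "prl xs (\<lambda>w. comm G s w [^] c w) \<in> carrier G"
    using Cons.prems s by (intro prl_closed nat_pow_closed comm_closed) auto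
  show ?case
  proof (cases "w = w0")
    case True
    have "w0 \<notin> set xs" using Cons True by auto
    hence eq: "prl xs (\<lambda>w. comm G s w [^] (c w + (if w0 = w then 1 else 0))) = prl xs (\<lambda>w. comm G s w [^] c w)"
      by (intro prl_cong) auto
    define P where "P = prl xs (\<lambda>w. comm G s w [^] c w)"
    have zc: "comm G s w0 \<in> carrier G" using s w0c by simp
    have "comm G s w0 \<otimes> prl (w # xs) (\<lambda>w. comm G s w [^] c w)
        = comm G s w0 \<otimes> (comm G s w0 [^] c w0 \<otimes> P)"
      using True by (simp add: prl_def P_def)
    also have "\<dots> = (comm G s w0 \<otimes> comm G s w0 [^] c w0) \<otimes> P"
      using zc pc by (simp add: P_def m_assoc)
    also have "\<dots> = comm G s w0 [^] Suc (c w0) \<otimes> P"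
      using zc by (simp only: nat_pow_Suc2)
    also have "\<dots> = prl (w # xs) (\<lambda>w. comm G s w [^] (c w + (if w0 = w then 1 else 0)))"
      using True eq by (simp add: prl_def P_def)
    finally show ?thesis .
  next
    case False
    have ih: "comm G s w0 \<otimes> prl xs (\<lambda>w. comm G s w [^] c w)
       = prl xs (\<lambda>w. comm G s w [^] (c w + (if w0 = w then 1 else 0)))"
      using Cons False by auto
    have cm: "comm G s w0 \<otimes> comm G s w [^] c w = comm G s w [^] c w \<otimes> comm G s w0"
      using central[of s w0 "comm G s w [^] c w"] s wc w0c by simp
    have "comm G s w0 \<otimes> prl (w # xs) (\<lambda>w. comm G s w [^] c w)
        = comm G s w0 \<otimes> (comm G s w [^] c w \<otimes> prl xs (\<lambda>w. comm G s w [^] c w))"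
      by (simp add: prl_def)
    also have "\<dots> = comm G s w [^] c w \<otimes> (comm G s w0 \<otimes> prl xs (\<lambda>w. comm G s w [^] c w))"
      using s wc w0c pc cm by (simp add: m_assoc[symmetric])
    also have "\<dots> = prl (w # xs) (\<lambda>w. comm G s w [^] (c w + (if w0 = w then 1 else 0)))"
      using False ih[unfolded prl_def] unfolding prl_def by simp
    finally show ?thesis .
  qed
qed

lemma prl_ones: "prl xs (\<lambda>w. \<one>) = \<one>"
  by (induct xs) (auto simp: prl_def)

lemma comm_ev:
  assumes s: "s \<in> carrier G" and al: "set al = alph" "distinct al"
  shows "set ws \<subseteq> alph \<Longrightarrow> comm G s (ev ws) = prl al (\<lambda>w. comm G s w [^] count_list ws w)"
proof (induct ws)
  case Nil
  have "comm G s \<one> = \<one>" using s by (simp add: comm_def)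
  thus ?case using prl_ones[of al] by (simp add: ev_def)
next
  case (Cons w0 ws)
  have w0: "w0 \<in> alph" and wsa: "set ws \<subseteq> alph" using Cons by auto
  have w0c: "w0 \<in> carrier G" using w0 alph_sub by auto
  have evc: "ev ws \<in> carrier G" using wsa alph_sub ev_closed by auto
  have "comm G s (ev (w0 # ws)) = comm G s w0 \<otimes> comm G s (ev ws)"
  proof -
    have "ev (w0 # ws) = w0 \<otimes> ev ws" by (simp add: ev_def)
    thus ?thesis using s w0c evc by (simp add: comm_mult_right)
  qed
  also have "\<dots> = comm G s w0 \<otimes> prl al (\<lambda>w. comm G s w [^] count_list ws w)"
    using Cons wsa by simp
  also have "\<dots> = prl al (\<lambda>w. comm G s w [^] (count_list ws w + (if w0 = w then 1 else 0)))"
    using al w0 alph_sub s by (intro prl_step) auto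
  also have "\<dots> = prl al (\<lambda>w. comm G s w [^] count_list (w0 # ws) w)"
    by (intro prl_cong) auto
  finally show ?case .
qed

lemma gen_word: "g \<in> generate G S \<Longrightarrow> \<exists>ws. set ws \<subseteq> alph \<and> ev ws = g"
proof (induct rule: generate.induct)
  case one thus ?case by (intro exI[of _ "[]"]) (auto simp: ev_def)
next
  case (incl h) thus ?case using S_sub by (intro exI[of _ "[h]"]) (auto simp: ev_def alph_def)
next
  case (inv h) thus ?case using S_sub by (intro exI[of _ "[inv h]"]) (auto simp: ev_def alph_def)
next
  case (eng h1 h2)
  then obtain ws vs where "set ws \<subseteq> alph" "ev ws = h1" "set vs \<subseteq> alph" "ev vs = h2" by blast
  thus ?case using alph_sub by (intro exI[of _ "ws @ vs"]) (auto simp: ev_append)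
qed

lemma wl_le: "hasw g m \<Longrightarrow> word_length G S g \<le> m"
proof -
  assume "hasw g m"
  then obtain ws where ws: "length ws \<le> m" "set ws \<subseteq> alph" "ev ws = g" by (auto simp: hasw_def)
  have "word_length G S g \<le> length ws"
    unfolding word_length_def
    by (rule Least_le) (use ws in \<open>auto simp: alph_def ev_def\<close>)
  thus ?thesis using ws by simp
qed


lemma gen_I:
  assumes x: "x \<in> carrier G" and gS: "generate G S = carrier G"
  shows "generate G ((\<lambda>s. comm G s x) ` S) = I_sub G x"
proof
  show "generate G ((\<lambda>s. comm G s x) ` S) \<subseteq> I_sub G x"
  proof
    fix g assume "g \<in> generate G ((\<lambda>s. comm G s x) ` S)"
    thus "g \<in> I_sub G x"
    proof (induct rule: generate.induct)
      case one
      have "comm G \<one> x = \<one>" using x by simp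
      thus ?case unfolding I_sub_def by (metis image_eqI one_closed)
    next
      case (incl h) thus ?case using S_sub unfolding I_sub_def by auto
    next
      case (inv h)
      then obtain s where s: "s \<in> S" "h = comm G s x" by auto
      have "inv h = comm G (inv s) x" using s S_sub x by (auto simp: comm_inv_left)
      thus ?case using s S_sub unfolding I_sub_def by auto
    next
      case (eng h1 h2)
      then obtain y1 y2 where y: "y1 \<in> carrier G" "y2 \<in> carrier G" "h1 = comm G y1 x" "h2 = comm G y2 x"
        unfolding I_sub_def by auto
      hence "h1 \<otimes> h2 = comm G (y1 \<otimes> y2) x" using x by (simp add: comm_mult_left)
      thus ?case using y unfolding I_sub_def by auto
    qed
  qed
next
  show "I_sub G x \<subseteq> generate G ((\<lambda>s. comm G s x) ` S)"
  proof
    fix g assume "g \<in> I_sub G x"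
    then obtain y where y: "y \<in> generate G S" "g = comm G y x" using gS unfolding I_sub_def by auto
    have "comm G y x \<in> generate G ((\<lambda>s. comm G s x) ` S)" using y(1)
    proof (induct rule: generate.induct)
      case one thus ?case using x by (simp add: generate.one)
    next
      case (incl h) thus ?case by (intro generate.incl) auto
    next
      case (inv h)
      hence "comm G (inv h) x = inv (comm G h x)" using S_sub x by (auto simp: comm_inv_left)
      thus ?case using inv by (auto intro: generate.inv)
    next
      case (eng h1 h2)
      have "h1 \<in> carrier G" "h2 \<in> carrier G" using eng gS by auto
      hence "comm G (h1 \<otimes> h2) x = comm G h1 x \<otimes> comm G h2 x" using x by (simp add: comm_mult_left)
      thus ?case using eng by (auto intro: generate.eng)
    qed
    thus "g \<in> generate G ((\<lambda>s. comm G s x) ` S)" using y by simp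
  qed
qed

end

theorem mainTheorem14:
  fixes N (structure) and S :: "'a set"
  assumes "group N"
    and "finite S" and "S \<subseteq> carrier N" and "generate N S = carrier N"
    and "torsion_free N"
    and "nilpotent_class2 N"
  shows "\<exists>C::real. C > 0 \<and> (\<forall>x\<in>carrier N.
           real (subgroup_norm N S (I_sub N x)) \<le> C * sqrt (real (word_length N S x)))"
proof -
  interpret c2grp N S
    using assms by (unfold c2grp_def c2grp_axioms_def nilpotent_class2_def) auto
  have "finite alph" using assms(2) by (simp add: alph_def)
  then obtain al where al: "set al = alph" "distinct al" using finite_distinct_list by blast
  define L where "L = length al"
  show ?thesis
  proof (intro exI[of _ "12 * real L + 1"] conjI ballI)
    show "0 < 12 * real L + 1" by simp
  next
    fix x assume x: "x \<in> carrier N"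
    define n where "n = word_length N S x"
    define P where "P = (\<lambda>n. \<exists>ws. length ws = n \<and> set ws \<subseteq> S \<union> (\<lambda>s. inv s) ` S \<and>
         foldr (\<lambda>a b. a \<otimes> b) ws \<one> = x)"
    obtain ws0 where "set ws0 \<subseteq> alph" "ev ws0 = x" using gen_word x assms(4) by blast
    hence "P (length ws0)" unfolding P_def alph_def ev_def by blast
    hence "P (Least P)" by (rule LeastI)
    moreover have "Least P = n" unfolding n_def word_length_def P_def by simp
    ultimately obtain ws where ws: "length ws = n" "set ws \<subseteq> alph" "ev ws = x"
      unfolding P_def alph_def ev_def by blast
    obtain k where k: "k * k \<le> n" "n < Suc k * Suc k" using sqrt_ex by blast
    have each: "word_length N S (comm N s x) \<le> L * (12 * k)" if s: "s \<in> S" for s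
    proof -
      have sc: "s \<in> carrier N" using s assms(3) by auto
      have eq: "comm N s x = prl al (\<lambda>w. comm N s w [^] count_list ws w)"
        using comm_ev[OF sc al ws(2)] ws(3) by simp
      have "hasw (prl al (\<lambda>w. comm N s w [^] count_list ws w)) (length al * (12 * k))"
      proof (rule prl_hasw)
        fix w assume w: "w \<in> set al"
        define m where "m = count_list ws w"
        have mn: "m \<le> n" using count_le_length[of ws w] ws(1) by (simp add: m_def)
        obtain km where km: "km * km \<le> m" "m < Suc km * Suc km" using sqrt_ex by blast
        have "km \<le> k"
        proof (rule ccontr)
          assume "\<not> km \<le> k"
          hence "Suc k * Suc k \<le> km * km" by (intro mult_le_mono) auto
          thus False using km mn k by linarith
        qed
        have "s \<in> alph" using s by (simp add: alph_def)
        hence "hasw (comm N s w [^] m) (12 * km)" using w al km by (intro hasw_key) auto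
        thus "hasw (comm N s w [^] count_list ws w) (12 * k)"
          using \<open>km \<le> k\<close> by (auto simp: m_def elim: hasw_mono)
      qed
      thus ?thesis using eq wl_le by (simp add: L_def)
    qed
    have "subgroup_norm N S (I_sub N x) \<le> L * (12 * k)"
      unfolding subgroup_norm_def
    proof (rule Least_le)
      show "\<exists>T. finite T \<and> T \<subseteq> I_sub N x \<and> generate N T = I_sub N x \<and>
          (\<forall>h\<in>T. word_length N S h \<le> L * (12 * k))"
        using assms(2,3) gen_I[OF x assms(4)] each
        by (intro exI[of _ "(\<lambda>s. comm N s x) ` S"]) (auto simp: I_sub_def)
    qed
    hence "real (subgroup_norm N S (I_sub N x)) \<le> real L * 12 * real k"
    proof -
      have "real (L * (12 * k)) = real L * 12 * real k" by simp
      thus ?thesis using \<open>subgroup_norm N S (I_sub N x) \<le> L * (12 * k)\<close>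
        by (metis of_nat_le_iff)
    qed
    also have "\<dots> \<le> real L * 12 * sqrt (real n)"
    proof -
      have "(real k)\<^sup>2 \<le> real n" proof -
        have "real (k * k) \<le> real n" using k(1) by (simp only: of_nat_le_iff)
        thus ?thesis by (simp add: power2_eq_square)
      qed
      hence "real k \<le> sqrt (real n)" by (rule real_le_rsqrt)
      thus ?thesis by (intro mult_left_mono) auto
    qed
    also have "\<dots> \<le> (12 * real L + 1) * sqrt (real n)"
      by (intro mult_right_mono) auto
    finally show "real (subgroup_norm N S (I_sub N x)) \<le> (12 * real L + 1) * sqrt (real (word_length N S x))"
      by (simp add: n_def)
  qed
qed

end
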